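(* Let $n\ge6$ and $C=(v_0,v_{n-2},v_2)$. Then $|H_n^{(3)}(C)|=\min_{C'}|H_n^{(3)}(C')|$, where $C'$ ranges over all $3$-valid tuples of length $3$ in $\Omega_n$.
   Context: $\Omega_n=\{v_0,\dots,v_{n-1}\}$ with cyclic order $v_0<\dots<v_{n-1}<v_0$, indices mod $n$. For distinct vertices $u,w$, $(u,w)$ is the set of vertices strictly between $u$ and $w$ moving clockwise from $u$ to $w$, and $[u,w]=(u,w)\cup\{u,w\}$. A tuple $(w_1,w_2,w_3)$ of distinct vertices is semi-valid if $w_1<w_3<w_2<w_1$ in clockwise cyclic order, and $3$-valid if moreover $|[w_i,w_{i-1}]|\ge3$ for $i=1,2,3$ (indices mod 3). $H_n^{(3)}(C)=\{e\in\binom{\Omega_n}{3}: e\cap[w_i,w_{i-1}]\neq\emptyset\ \text{for } i=1,2,3\}$. *)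

theory Defs
  imports Main
begin

text \<open>Vertices of Omega_n are represented by their indices 0..<n; clockwise
  means increasing index modulo n.\<close>

definition Omega :: "nat \<Rightarrow> nat set" where
  "Omega n = {0..<n}"

definition cyc_open :: "nat \<Rightarrow> nat \<Rightarrow> nat \<Rightarrow> nat set" where
  "cyc_open n u w = {(u + k) mod n | k. 0 < k \<and> k < (w + n - u) mod n}"

definition cyc_closed :: "nat \<Rightarrow> nat \<Rightarrow> nat \<Rightarrow> nat set" where
  "cyc_closed n u w = cyc_open n u w \<union> {u, w}"

definition semi_valid :: "nat \<Rightarrow> nat \<times> nat \<times> nat \<Rightarrow> bool" where
  "semi_valid n C = (case C of (w1, w2, w3) \<Rightarrow>
     w1 \<in> Omega n \<and> w2 \<in> Omega n \<and> w3 \<in> Omega n \<and>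
     w1 \<noteq> w2 \<and> w2 \<noteq> w3 \<and> w1 \<noteq> w3 \<and> w3 \<in> cyc_open n w1 w2)"

definition valid3 :: "nat \<Rightarrow> nat \<times> nat \<times> nat \<Rightarrow> bool" where
  "valid3 n C = (case C of (w1, w2, w3) \<Rightarrow>
     semi_valid n C \<and>
     card (cyc_closed n w1 w3) \<ge> 3 \<and>
     card (cyc_closed n w2 w1) \<ge> 3 \<and>
     card (cyc_closed n w3 w2) \<ge> 3)"

definition H3 :: "nat \<Rightarrow> nat \<times> nat \<times> nat \<Rightarrow> nat set set" where
  "H3 n C = (case C of (w1, w2, w3) \<Rightarrow>
     {e. e \<subseteq> Omega n \<and> card e = 3 \<and>
         e \<inter> cyc_closed n w1 w3 \<noteq> {} \<and>
         e \<inter> cyc_closed n w2 w1 \<noteq> {} \<and>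
         e \<inter> cyc_closed n w3 w2 \<noteq> {}})"

end

theory Submission
  imports Defs
begin

lemma choose2_int: "2 * int (m choose 2) = int m * (int m - 1)"
proof (induction m)
  case (Suc m)
  have "Suc m choose 2 = m + (m choose 2)" by (simp add: numeral_2_eq_2)
  then show ?case using Suc by (simp add: algebra_simps)
qed simp

lemma choose3_int: "6 * int (m choose 3) = int m * (int m - 1) * (int m - 2)"
proof (induction m)
  case 0 then show ?case by simp
next
  case (Suc m)
  have "(Suc m choose 3) = (m choose 2) + (m choose 3)"
    by (simp add: numeral_3_eq_3 numeral_2_eq_2)
  then show ?case using Suc choose2_int[of m] by (simp add: algebra_simps)
qed

lemma mod_int_eq:
  fixes x y n :: nat
  assumes "x < n" "y < n" "int x mod int n = int y mod int n" shows "x = y"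
  using assms by simp

lemma dist_int:
  fixes x y n :: nat
  assumes "x < n" "y < n"
  shows "int ((y + n - x) mod n) = (int y - int x) mod int n"
proof -
  have "int ((y + n - x) mod n) = int (y + n - x) mod int n" by (simp add: of_nat_mod)
  also have "int (y + n - x) = (int y - int x) + int n" using assms by simp
  finally show ?thesis by simp
qed

lemma cyc_open_alt:
  "cyc_open n u w = (\<lambda>k. (u+k) mod n) ` {0<..<(w+n-u) mod n}"
  unfolding cyc_open_def by auto

lemma inj_shift:
  fixes n u :: nat
  shows "inj_on (\<lambda>k. (u+k) mod n) {..<n}"
proof (rule inj_onI)
  fix a b assume "a \<in> {..<n}" "b \<in> {..<n}" "(u+a) mod n = (u+b) mod n"
  then have "int ((u+a) mod n) = int ((u+b) mod n)" by simp
  then have "(int u + int a) mod int n = (int u + int b) mod int n" by (simp add: of_nat_mod)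
  then have "int a mod int n = int b mod int n" by (metis mod_add_left_eq add.commute mod_add_cong add_diff_cancel_left' mod_diff_eq)
  then show "a = b" using \<open>a \<in> {..<n}\<close> \<open>b \<in> {..<n}\<close> by simp
qed

lemma shift_dist:
  fixes u w n :: nat
  assumes "u < n" "w < n"
  shows "(u + (w+n-u) mod n) mod n = w"
proof -
  have "int ((u + (w+n-u) mod n) mod n) = (int u + int ((w+n-u) mod n)) mod int n"
    by (simp add: of_nat_mod)
  also have "\<dots> = (int u + (int w - int u) mod int n) mod int n" using dist_int[OF assms] by simp
  also have "\<dots> = int w mod int n" by (simp add: mod_add_right_eq)
  also have "\<dots> = int w" using assms by simp
  finally show ?thesis by linarith
qed

lemma dist_pos:
  fixes u w n :: nat
  assumes "u < n" "w < n" "u \<noteq> w"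
  shows "(w+n-u) mod n > 0"
proof (rule ccontr)
  assume "\<not> ?thesis"
  then have "(w+n-u) mod n = 0" by simp
  then have "w = u" using shift_dist[OF assms(1,2)] assms by simp
  then show False using assms by simp
qed

lemma card_closed:
  fixes u w n :: nat
  assumes "u < n" "w < n" "u \<noteq> w"
  shows "card (cyc_closed n u w) = (w+n-u) mod n + 1"
proof -
  define d where "d = (w+n-u) mod n"
  have dn: "d < n" using assms d_def by simp
  have d0: "d > 0" using dist_pos[OF assms] d_def by simp
  have inj: "inj_on (\<lambda>k. (u+k) mod n) {..<n}" by (rule inj_shift)
  have o: "cyc_open n u w = (\<lambda>k. (u+k) mod n) ` {0<..<d}" using cyc_open_alt d_def by simp
  have co: "card (cyc_open n u w) = d - 1"
  proof -
    have "inj_on (\<lambda>k. (u+k) mod n) {0<..<d}" by (rule inj_on_subset[OF inj]) (use dn in auto)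
    then show ?thesis unfolding o by (simp add: card_image)
  qed
  have un: "u \<notin> cyc_open n u w"
  proof
    assume "u \<in> cyc_open n u w"
    then obtain k where k: "k \<in> {0<..<d}" "u = (u+k) mod n" using o by auto
    have "(u+k) mod n = (u+0) mod n" using k(2)[symmetric] assms by simp
    moreover have "k \<in> {..<n}" "(0::nat) \<in> {..<n}" using k(1) dn by auto
    ultimately have "k = 0" by (rule inj_onD[OF inj])
    then show False using k by simp
  qed
  have wn: "w \<notin> cyc_open n u w"
  proof
    assume "w \<in> cyc_open n u w"
    then obtain k where k: "k \<in> {0<..<d}" "w = (u+k) mod n" using o by auto
    have "(u+d) mod n = w" using shift_dist[OF assms(1,2)] unfolding d_def .
    then have "(u+k) mod n = (u+d) mod n" using k(2) by simp
    moreover have "k \<in> {..<n}" "d \<in> {..<n}" using k(1) dn by auto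
    ultimately have "k = d" by (rule inj_onD[OF inj])
    then show False using k by simp
  qed
  have fin: "finite (cyc_open n u w)" unfolding o by simp
  have "card (cyc_closed n u w) = card (cyc_open n u w) + 2"
    unfolding cyc_closed_def using un wn fin assms(3) by (simp add: card_insert_if)
  then show ?thesis using co d0 d_def by simp
qed

lemma dist_shift:
  fixes u w n t :: nat
  assumes "u < n" "w < n"
  shows "((w+t) mod n + n - (u+t) mod n) mod n = (w+n-u) mod n"
proof -
  have n0: "n > 0" using assms by simp
  have a: "(u+t) mod n < n" "(w+t) mod n < n" using n0 by auto
  have "int (((w+t) mod n + n - (u+t) mod n) mod n) = (int ((w+t) mod n) - int ((u+t) mod n)) mod int n"
    using dist_int[OF a(1) a(2)] by simp
  also have "\<dots> = ((int w + int t) mod int n - (int u + int t) mod int n) mod int n"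
    by (simp add: of_nat_mod)
  also have "\<dots> = ((int w + int t) - (int u + int t)) mod int n" by (simp add: mod_diff_eq)
  also have "\<dots> = (int w - int u) mod int n" by simp
  also have "\<dots> = int ((w+n-u) mod n)" using dist_int[OF assms(1) assms(2)] by simp
  finally show ?thesis by linarith
qed

lemma image_open_shift:
  fixes u w n t :: nat
  assumes "u < n" "w < n"
  shows "(\<lambda>x. (x+t) mod n) ` cyc_open n u w = cyc_open n ((u+t) mod n) ((w+t) mod n)"
proof -
  have e: "\<And>k. ((u+k) mod n + t) mod n = ((u+t) mod n + k) mod n"
  proof -
    fix k
    have "((u+k) mod n + t) mod n = (u+k+t) mod n" by (rule mod_add_left_eq)
    moreover have "((u+t) mod n + k) mod n = (u+t+k) mod n" by (rule mod_add_left_eq)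
    moreover have "u+k+t = u+t+k" by simp
    ultimately show "((u+k) mod n + t) mod n = ((u+t) mod n + k) mod n" by simp
  qed
  show ?thesis
    unfolding cyc_open_alt dist_shift[OF assms] image_image e ..
qed

lemma image_closed_shift:
  fixes u w n t :: nat
  assumes "u < n" "w < n"
  shows "(\<lambda>x. (x+t) mod n) ` cyc_closed n u w = cyc_closed n ((u+t) mod n) ((w+t) mod n)"
  unfolding cyc_closed_def image_Un image_open_shift[OF assms] by simp

lemma H3_shift_le:
  fixes n t u1 u2 u3 :: nat
  assumes "u1 < n" "u2 < n" "u3 < n"
  shows "card (H3 n (u1,u2,u3)) \<le> card (H3 n ((u1+t) mod n, (u2+t) mod n, (u3+t) mod n))"
proof -
  define f where "f = (\<lambda>x. (x+t) mod n)"
  have n0: "n > 0" using assms by simp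
  have injf: "inj_on f (Omega n)"
  proof -
    have "inj_on (\<lambda>k. (t+k) mod n) {..<n}" by (rule inj_shift)
    then show ?thesis unfolding f_def Omega_def by (simp add: add.commute lessThan_atLeast0)
  qed
  have cl: "\<And>u w. u < n \<Longrightarrow> w < n \<Longrightarrow> f ` cyc_closed n u w = cyc_closed n (f u) (f w)"
    unfolding f_def by (rule image_closed_shift)
  have fO: "f ` Omega n \<subseteq> Omega n" unfolding f_def Omega_def using n0 by auto
  show ?thesis
  proof (rule card_inj_on_le)
    show "inj_on (image f) (H3 n (u1,u2,u3))"
      by (rule inj_onI) (auto simp: H3_def dest: inj_on_image_eq_iff[OF injf, THEN iffD1, rotated 2])
    show "image f ` H3 n (u1,u2,u3) \<subseteq> H3 n ((u1+t) mod n, (u2+t) mod n, (u3+t) mod n)"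
    proof
      fix e' assume "e' \<in> image f ` H3 n (u1,u2,u3)"
      then obtain e where e: "e' = f ` e" "e \<subseteq> Omega n" "card e = 3"
        "e \<inter> cyc_closed n u1 u3 \<noteq> {}" "e \<inter> cyc_closed n u2 u1 \<noteq> {}" "e \<inter> cyc_closed n u3 u2 \<noteq> {}"
        unfolding H3_def by auto
      have "card (f ` e) = 3" using e(2,3) card_image inj_on_subset[OF injf] by metis
      moreover have "f ` e \<subseteq> Omega n" using e(2) fO by blast
      moreover have "f ` e \<inter> cyc_closed n (f u1) (f u3) \<noteq> {}"
        using e(4) cl[OF assms(1) assms(3)] by blast
      moreover have "f ` e \<inter> cyc_closed n (f u2) (f u1) \<noteq> {}"
        using e(5) cl[OF assms(2) assms(1)] by blast
      moreover have "f ` e \<inter> cyc_closed n (f u3) (f u2) \<noteq> {}"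
        using e(6) cl[OF assms(3) assms(2)] by blast
      ultimately show "e' \<in> H3 n ((u1+t) mod n, (u2+t) mod n, (u3+t) mod n)"
        unfolding H3_def e(1) f_def by auto
    qed
    show "finite (H3 n ((u1+t) mod n, (u2+t) mod n, (u3+t) mod n))"
      by (rule finite_subset[of _ "Pow (Omega n)"]) (auto simp: H3_def Omega_def)
  qed
qed

lemma incl_excl3:
  assumes "finite X" "finite Y" "finite Z"
  shows "int (card (X \<union> Y \<union> Z)) = int (card X) + int (card Y) + int (card Z)
     - int (card (X \<inter> Y)) - int (card (X \<inter> Z)) - int (card (Y \<inter> Z)) + int (card (X \<inter> Y \<inter> Z))"
proof -
  have 1: "card X + card Y = card (X \<union> Y) + card (X \<inter> Y)" using card_Un_Int assms by blast
  have 2: "card (X \<union> Y) + card Z = card (X \<union> Y \<union> Z) + card ((X \<union> Y) \<inter> Z)"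
    using card_Un_Int assms by (meson finite_UnI)
  have 3: "card (X \<inter> Z) + card (Y \<inter> Z) = card ((X \<inter> Z) \<union> (Y \<inter> Z)) + card ((X \<inter> Z) \<inter> (Y \<inter> Z))"
    using card_Un_Int assms by (meson finite_Int)
  have e1: "(X \<union> Y) \<inter> Z = (X \<inter> Z) \<union> (Y \<inter> Z)" by blast
  have e2: "(X \<inter> Z) \<inter> (Y \<inter> Z) = X \<inter> Y \<inter> Z" by blast
  show ?thesis using 1 2 3 unfolding e1 e2 by linarith
qed

definition S3 :: "nat set \<Rightarrow> nat set set" where
  "S3 X = {e. e \<subseteq> X \<and> card e = 3}"

lemma card_S3: "finite X \<Longrightarrow> card (S3 X) = card X choose 3"
  unfolding S3_def by (rule n_subsets)

lemma S3_Int: "S3 X \<inter> S3 Y = S3 (X \<inter> Y)" unfolding S3_def by auto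

lemma finite_S3: "finite X \<Longrightarrow> finite (S3 X)"
  unfolding S3_def by (rule finite_subset[of _ "Pow X"]) auto

lemma arc1: "0 < q \<Longrightarrow> q < n \<Longrightarrow> cyc_closed n 0 q = {0..q}"
proof -
  assume a: "0 < q" "q < n"
  have "cyc_open n 0 q = (\<lambda>k. k mod n) ` {0<..<q}" unfolding cyc_open_alt using a by simp
  also have "\<dots> = (\<lambda>k. k) ` {0<..<q}" by (rule image_cong) (use a in auto)
  finally show ?thesis unfolding cyc_closed_def using a by auto
qed

lemma arc2: "q < p \<Longrightarrow> p < n \<Longrightarrow> cyc_closed n q p = {q..p}"
proof -
  assume a: "q < p" "p < n"
  have e: "p + n - q = (p - q) + n" using a by simp
  have "(p + n - q) mod n = ((p - q) + n) mod n" by (subst e) (rule refl)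
  also have "\<dots> = (p - q) mod n" by (simp only: mod_add_self2)
  also have "\<dots> = p - q" using a by (intro mod_less) simp
  finally have "(p + n - q) mod n = p - q" .
  then have "cyc_open n q p = (\<lambda>k. (q+k) mod n) ` {0<..<p-q}" unfolding cyc_open_alt by simp
  also have "\<dots> = (\<lambda>k. q+k) ` {0<..<p-q}" by (rule image_cong) (use a in auto)
  also have "\<dots> = {q<..<p}"
  proof
    show "{q<..<p} \<subseteq> (\<lambda>k. q+k) ` {0<..<p-q}"
    proof
      fix x assume "x \<in> {q<..<p}"
      then show "x \<in> (\<lambda>k. q+k) ` {0<..<p-q}" by (intro image_eqI[of _ _ "x - q"]) auto
    qed
  qed auto
  finally show ?thesis unfolding cyc_closed_def using a by auto
qed

lemma arc3: "0 < p \<Longrightarrow> p < n \<Longrightarrow> cyc_closed n p 0 = {p..<n} \<union> {0}"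
proof -
  assume a: "0 < p" "p < n"
  have "(0 + n - p) mod n = n - p" using a by simp
  then have "cyc_open n p 0 = (\<lambda>k. (p+k) mod n) ` {0<..<n-p}" unfolding cyc_open_alt by simp
  also have "\<dots> = (\<lambda>k. p+k) ` {0<..<n-p}" by (rule image_cong) (use a in auto)
  also have "\<dots> = {p<..<n}"
  proof
    show "{p<..<n} \<subseteq> (\<lambda>k. p+k) ` {0<..<n-p}"
    proof
      fix x assume "x \<in> {p<..<n}"
      then show "x \<in> (\<lambda>k. p+k) ` {0<..<n-p}" by (intro image_eqI[of _ _ "x - p"]) auto
    qed
  qed auto
  finally show ?thesis unfolding cyc_closed_def using a by auto
qed

lemma H3_count:
  fixes n p q :: nat
  assumes "2 \<le> q" "q + 2 \<le> p" "p + 2 \<le> n"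
  shows "int (card (H3 n (0,p,q))) = int (n choose 3) - int ((n-q-1) choose 3) - int ((p-1) choose 3)
     - int ((q + (n-p-1)) choose 3) + int ((p-q-1) choose 3) + int ((n-p-1) choose 3) + int ((q-1) choose 3)"
proof -
  define Om where "Om = {0..<n}"
  define B1 where "B1 = {q<..<n}"
  define B2 where "B2 = {0<..<p}"
  define B3 where "B3 = {..<q} \<union> {p<..<n}"
  have A1: "cyc_closed n 0 q = {0..q}" using arc1 assms by simp
  have A2: "cyc_closed n p 0 = {p..<n} \<union> {0}" using arc3 assms by simp
  have A3: "cyc_closed n q p = {q..p}" using arc2 assms by simp
  have c1: "\<And>e. e \<subseteq> Om \<Longrightarrow> e \<inter> {0..q} = {} \<longleftrightarrow> e \<subseteq> B1"
    unfolding Om_def B1_def by (auto simp: disjoint_iff subset_iff)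
  have c2: "\<And>e. e \<subseteq> Om \<Longrightarrow> e \<inter> ({p..<n} \<union> {0}) = {} \<longleftrightarrow> e \<subseteq> B2"
    unfolding Om_def B2_def by (auto simp: disjoint_iff subset_iff)
  have c3: "\<And>e. e \<subseteq> Om \<Longrightarrow> e \<inter> {q..p} = {} \<longleftrightarrow> e \<subseteq> B3"
    unfolding Om_def B3_def by (auto simp: disjoint_iff subset_iff)
  have B: "B1 \<subseteq> Om" "B2 \<subseteq> Om" "B3 \<subseteq> Om" unfolding Om_def B1_def B2_def B3_def using assms by auto
  have HD: "H3 n (0,p,q) = S3 Om - (S3 B1 \<union> S3 B2 \<union> S3 B3)"
  proof -
    have "H3 n (0,p,q) = {e. e \<subseteq> Om \<and> card e = 3 \<and> e \<inter> {0..q} \<noteq> {} \<and> e \<inter> ({p..<n} \<union> {0}) \<noteq> {} \<and> e \<inter> {q..p} \<noteq> {}}"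
      by (simp add: H3_def A1 A2 A3 Om_def Omega_def)
    also have "\<dots> = S3 Om - (S3 B1 \<union> S3 B2 \<union> S3 B3)"
    proof (rule set_eqI)
      fix e
      show "e \<in> {e. e \<subseteq> Om \<and> card e = 3 \<and> e \<inter> {0..q} \<noteq> {} \<and> e \<inter> ({p..<n} \<union> {0}) \<noteq> {} \<and> e \<inter> {q..p} \<noteq> {}}
        \<longleftrightarrow> e \<in> S3 Om - (S3 B1 \<union> S3 B2 \<union> S3 B3)"
      proof (cases "e \<subseteq> Om")
        case True
        show ?thesis using c1[OF True] c2[OF True] c3[OF True] True unfolding S3_def by auto
      next
        case False
        then show ?thesis unfolding S3_def by auto
      qed
    qed
    finally show ?thesis .
  qed
  have sub: "S3 B1 \<union> S3 B2 \<union> S3 B3 \<subseteq> S3 Om" using B unfolding S3_def by blast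
  have fin: "finite Om" "finite B1" "finite B2" "finite B3" unfolding Om_def B1_def B2_def B3_def by auto
  have "card (H3 n (0,p,q)) = card (S3 Om) - card (S3 B1 \<union> S3 B2 \<union> S3 B3)"
    unfolding HD proof (rule card_Diff_subset)
    show "finite (S3 B1 \<union> S3 B2 \<union> S3 B3)" using fin by (simp add: finite_S3)
  qed (rule sub)
  moreover have "card (S3 B1 \<union> S3 B2 \<union> S3 B3) \<le> card (S3 Om)"
    using sub by (intro card_mono) (auto intro: finite_S3 fin)
  ultimately have 1: "int (card (H3 n (0,p,q))) = int (card (S3 Om)) - int (card (S3 B1 \<union> S3 B2 \<union> S3 B3))"
    by simp
  have 2: "int (card (S3 B1 \<union> S3 B2 \<union> S3 B3)) = int (card (S3 B1)) + int (card (S3 B2)) + int (card (S3 B3))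
     - int (card (S3 (B1 \<inter> B2))) - int (card (S3 (B1 \<inter> B3))) - int (card (S3 (B2 \<inter> B3))) + int (card (S3 (B1 \<inter> B2 \<inter> B3)))"
    using incl_excl3[OF finite_S3 finite_S3 finite_S3, OF fin(2,3,4)] by (simp add: S3_Int)
  have i12: "B1 \<inter> B2 = {q<..<p}" unfolding B1_def B2_def using assms by auto
  have i13: "B1 \<inter> B3 = {p<..<n}" unfolding B1_def B3_def using assms by auto
  have i23: "B2 \<inter> B3 = {0<..<q}" unfolding B2_def B3_def using assms by auto
  have i123: "B1 \<inter> B2 \<inter> B3 = {}" unfolding B1_def B2_def B3_def using assms by auto
  have cB3: "card B3 = q + (n-p-1)"
    unfolding B3_def using assms by (subst card_Un_disjoint) auto
  have k: "card Om = n" "card B1 = n-q-1" "card B2 = p-1" "card (B1 \<inter> B2) = p-q-1"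
    "card (B1 \<inter> B3) = n-p-1" "card (B2 \<inter> B3) = q-1" "card (B1 \<inter> B2 \<inter> B3) = 0"
    using i12 i13 i23 i123 unfolding Om_def B1_def B2_def by simp_all
  have f2: "finite (B1 \<inter> B2)" "finite (B1 \<inter> B3)" "finite (B2 \<inter> B3)" "finite (B1 \<inter> B2 \<inter> B3)"
    using fin by auto
  have 3: "card (S3 Om) = n choose 3" "card (S3 B1) = (n-q-1) choose 3" "card (S3 B2) = (p-1) choose 3"
     "card (S3 B3) = (q + (n-p-1)) choose 3" "card (S3 (B1 \<inter> B2)) = (p-q-1) choose 3"
     "card (S3 (B1 \<inter> B3)) = (n-p-1) choose 3" "card (S3 (B2 \<inter> B3)) = (q-1) choose 3"
     "card (S3 (B1 \<inter> B2 \<inter> B3)) = 0"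
    using card_S3[OF fin(1)] card_S3[OF fin(2)] card_S3[OF fin(3)] card_S3[OF fin(4)]
      card_S3[OF f2(1)] card_S3[OF f2(2)] card_S3[OF f2(3)] card_S3[OF f2(4)] k cB3 by simp_all
  show ?thesis unfolding 1 2 3 by simp
qed



lemma lin_aux:
  fixes a b c d e f g h T P :: int
  assumes "6*(a+a+1-b) - 6*(c+d+e-f-g-h) = P" "0 \<le> P"
  shows "T - a - a - 1 + b + 0 + 0 \<le> T - c - d - e + f + g + h"
  using assms by (simp add: algebra_simps)

lemma key:
  fixes x y z :: nat
  shows "int ((x+y+z+6) choose 3) - int ((x+y+z+3) choose 3) - int ((x+y+z+3) choose 3)
     - int (3 choose 3) + int ((x+y+z+1) choose 3) + int (1 choose 3) + int (1 choose 3)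
   \<le> int ((x+y+z+6) choose 3) - int ((y+z+3) choose 3) - int ((x+y+3) choose 3)
     - int ((x+z+3) choose 3) + int ((y+1) choose 3) + int ((z+1) choose 3) + int ((x+1) choose 3)"
proof -
  define X where "X = int x"
  define Y where "Y = int y"
  define Z where "Z = int z"
  have E: "\<And>m. 6 * int (m choose 3) = int m * (int m - 1) * (int m - 2)" by (rule choose3_int)
  have e1: "6 * int ((x+y+z+3) choose 3) = (X+Y+Z+3)*(X+Y+Z+2)*(X+Y+Z+1)" using E[of "x+y+z+3"] unfolding X_def Y_def Z_def by (simp add: algebra_simps)
  have e2: "6 * int ((x+y+z+1) choose 3) = (X+Y+Z+1)*(X+Y+Z)*(X+Y+Z - 1)" using E[of "x+y+z+1"] unfolding X_def Y_def Z_def by (simp add: algebra_simps)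
  have e3: "6 * int ((y+z+3) choose 3) = (Y+Z+3)*(Y+Z+2)*(Y+Z+1)" using E[of "y+z+3"] unfolding Y_def Z_def by (simp add: algebra_simps)
  have e4: "6 * int ((x+y+3) choose 3) = (X+Y+3)*(X+Y+2)*(X+Y+1)" using E[of "x+y+3"] unfolding X_def Y_def by (simp add: algebra_simps)
  have e5: "6 * int ((x+z+3) choose 3) = (X+Z+3)*(X+Z+2)*(X+Z+1)" using E[of "x+z+3"] unfolding X_def Z_def by (simp add: algebra_simps)
  have e6: "6 * int ((x+1) choose 3) = (X+1)*X*(X - 1)" using E[of "x+1"] unfolding X_def by (simp add: algebra_simps)
  have e7: "6 * int ((y+1) choose 3) = (Y+1)*Y*(Y - 1)" using E[of "y+1"] unfolding Y_def by (simp add: algebra_simps)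
  have e8: "6 * int ((z+1) choose 3) = (Z+1)*Z*(Z - 1)" using E[of "z+1"] unfolding Z_def by (simp add: algebra_simps)
  have e9: "int (3 choose 3) = 1" "int (1 choose 3) = 0" by simp_all
  have pos: "0 \<le> 12*(X*Y+Y*Z+Z*X) + 6*(X*Y*Z)" unfolding X_def Y_def Z_def by simp
  have d: "6 * (int ((x+y+z+3) choose 3) + int ((x+y+z+3) choose 3) + 1 - int ((x+y+z+1) choose 3))
         - 6 * (int ((y+z+3) choose 3) + int ((x+y+3) choose 3) + int ((x+z+3) choose 3)
                 - int ((y+1) choose 3) - int ((z+1) choose 3) - int ((x+1) choose 3))
        = 12*(X*Y+Y*Z+Z*X) + 6*(X*Y*Z)"
    unfolding right_diff_distrib distrib_left e1 e2 e3 e4 e5 e6 e7 e8 by (simp add: algebra_simps)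
  show ?thesis unfolding e9 by (rule lin_aux[OF d pos])
qed

lemma qk: fixes u k n :: nat assumes "u < n" "k < n" shows "(((u+k) mod n) + n - u) mod n = k"
proof -
  have a: "(u+k) mod n < n" using assms by simp
  have "int ((((u+k) mod n) + n - u) mod n) = (int ((u+k) mod n) - int u) mod int n"
    using dist_int[OF assms(1) a] by simp
  also have "\<dots> = ((int u + int k) mod int n - int u) mod int n" by (simp add: of_nat_mod)
  also have "\<dots> = int k mod int n" by (simp add: mod_diff_left_eq)
  also have "\<dots> = int k" using assms by simp
  finally show ?thesis by linarith
qed

lemma rev_dist: fixes u w n :: nat assumes "u < n" "w < n" "u \<noteq> w"
  shows "(u+n-w) mod n = n - (w+n-u) mod n"
proof -
  have p: "(w+n-u) mod n > 0" "(w+n-u) mod n < n" using dist_pos[OF assms] assms by auto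
  have "int ((u+n-w) mod n) = (int u - int w) mod int n" using dist_int[OF assms(2,1)] by simp
  also have "\<dots> = (- (int w - int u)) mod int n" by simp
  also have "\<dots> = int n - (int w - int u) mod int n"
  proof -
    have nz: "(int w - int u) mod int n \<noteq> 0" using p dist_int[OF assms(1,2)] by simp
    show ?thesis using zmod_zminus1_eq_if[of "int w - int u" "int n"] nz by metis
  qed
  also have "\<dots> = int n - int ((w+n-u) mod n)" using dist_int[OF assms(1,2)] by simp
  finally show ?thesis using p by linarith
qed

lemma diff_dist: fixes w1 w2 w3 n :: nat assumes "w1 < n" "w2 < n" "w3 < n"
  "(w3+n-w1) mod n \<le> (w2+n-w1) mod n"
  shows "(w2+n-w3) mod n = (w2+n-w1) mod n - (w3+n-w1) mod n"
proof -
  have "int ((w2+n-w3) mod n) = (int w2 - int w3) mod int n" using dist_int[OF assms(3,2)] by simp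
  also have "\<dots> = ((int w2 - int w1) - (int w3 - int w1)) mod int n" by simp
  also have "\<dots> = ((int w2 - int w1) mod int n - (int w3 - int w1) mod int n) mod int n" by (simp add: mod_diff_eq)
  also have "\<dots> = (int ((w2+n-w1) mod n) - int ((w3+n-w1) mod n)) mod int n"
    using dist_int[OF assms(1,2)] dist_int[OF assms(1,3)] by simp
  also have "\<dots> = int ((w2+n-w1) mod n) - int ((w3+n-w1) mod n)"
  proof -
    have "(w2+n-w1) mod n < n" using assms by simp
    then show ?thesis using assms(4) by (intro mod_pos_pos_trivial) auto
  qed
  finally show ?thesis using assms(4) by linarith
qed

lemma C0_count:
  fixes n :: nat assumes "n \<ge> 6"
  shows "int (card (H3 n (0, n-2, 2))) = int (n choose 3) - int ((n-6+3) choose 3) - int ((n-6+3) choose 3)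
     - int (3 choose 3) + int ((n-6+1) choose 3) + int (1 choose 3) + int (1 choose 3)"
proof -
  have a: "2 \<le> (2::nat)" "2 + 2 \<le> n - 2" "n - 2 + 2 \<le> n" using assms by auto
  have e: "n-2-1 = n-6+3" "2 + (n-(n-2)-1) = 3" "n-2-2-1 = n-6+1" "n-(n-2)-1 = 1" "(2::nat)-1 = 1" "(2::nat)+1 = 3"
    using assms by auto
  show ?thesis using H3_count[OF a] unfolding e .
qed

lemma C0_valid: fixes n :: nat assumes "n \<ge> 6" shows "valid3 n (0, n-2, 2)"
proof -
  have o: "cyc_open n 0 (n-2) = (\<lambda>k. k mod n) ` {0<..<(n-2+n) mod n}" using cyc_open_alt[of n 0 "n-2"] by simp
  have "n - 2 + n = (n-2) + n" by simp
  have m: "(n-2+n) mod n = n-2"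
  proof -
    have "(n-2+n) mod n = (n-2) mod n" by (simp only: mod_add_self2)
    also have "\<dots> = n-2" using assms by (intro mod_less) simp
    finally show ?thesis .
  qed
  have "2 \<in> cyc_open n 0 (n-2)" unfolding o m using assms by (intro image_eqI[of _ _ 2]) auto
  moreover have "card (cyc_closed n 0 2) \<ge> 3" using arc1[of 2 n] assms by simp
  moreover have "card (cyc_closed n (n-2) 0) \<ge> 3"
  proof -
    have "{n-2..<n} \<union> {0} = {n-2, n-1, 0}" using assms by auto
    then show ?thesis using arc3[of "n-2" n] assms by simp
  qed
  moreover have "card (cyc_closed n 2 (n-2)) \<ge> 3" using arc2[of 2 "n-2" n] assms by simp
  ultimately show ?thesis using assms unfolding valid3_def semi_valid_def Omega_def by auto
qed

lemma valid_ge: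
  fixes n :: nat and C :: "nat \<times> nat \<times> nat"
  assumes "n \<ge> 6" "valid3 n C"
  shows "card (H3 n (0, n-2, 2)) \<le> card (H3 n C)"
proof -
  obtain w1 w2 w3 where C: "C = (w1,w2,w3)" by (cases C) auto
  have w: "w1 < n" "w2 < n" "w3 < n" "w1 \<noteq> w2" "w2 \<noteq> w3" "w1 \<noteq> w3" "w3 \<in> cyc_open n w1 w2"
    and cards: "card (cyc_closed n w1 w3) \<ge> 3" "card (cyc_closed n w2 w1) \<ge> 3" "card (cyc_closed n w3 w2) \<ge> 3"
    using assms(2) unfolding C valid3_def semi_valid_def Omega_def by auto
  define p where "p = (w2+n-w1) mod n"
  define q where "q = (w3+n-w1) mod n"
  obtain k where k: "0 < k" "k < p" "w3 = (w1+k) mod n"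
    using w(7) unfolding cyc_open_alt p_def by auto
  have pn: "p < n" unfolding p_def using w by simp
  have qk': "q = k" unfolding q_def k(3) using qk[OF w(1), of k] k pn by simp
  have q2: "q \<ge> 2" using cards(1) card_closed[OF w(1) w(3) w(6)] q_def by simp
  have c2: "card (cyc_closed n w2 w1) = n - p + 1"
    using card_closed[OF w(2) w(1)] w rev_dist[OF w(1) w(2) w(4)] p_def by simp
  have c3: "card (cyc_closed n w3 w2) = p - q + 1"
    using card_closed[OF w(3) w(2)] w diff_dist[OF w(1,2,3)] p_def q_def qk' k by simp
  have pq: "q + 2 \<le> p" using cards(3) c3 qk' k by simp
  have np: "p + 2 \<le> n" using cards(2) c2 pn by simp
  have le1: "card (H3 n (0,p,q)) \<le> card (H3 n ((0+w1) mod n, (p+w1) mod n, (q+w1) mod n))"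
    using H3_shift_le[of 0 n p q w1] pn pq by simp
  have s: "(0+w1) mod n = w1" "(p+w1) mod n = w2" "(q+w1) mod n = w3"
    using w shift_dist[OF w(1) w(2)] shift_dist[OF w(1) w(3)] unfolding p_def q_def by (simp_all add: add.commute)
  have le1': "card (H3 n (0,p,q)) \<le> card (H3 n C)" using le1 unfolding s C .
  define x where "x = q - 2"
  define y where "y = p - q - 2"
  define z where "z = n - p - 2"
  have eqs: "x+y+z+6 = n" "y+z+3 = n-q-1" "x+y+3 = p-1" "x+z+3 = q+(n-p-1)" "y+1 = p-q-1" "z+1 = n-p-1" "x+1 = q-1"
    "x+y+z+3 = n-6+3" "x+y+z+1 = n-6+1"
    unfolding x_def y_def z_def using q2 pq np by auto
  have "int (card (H3 n (0, n-2, 2))) \<le> int (card (H3 n (0,p,q)))"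
    using key[of x y z] unfolding eqs C0_count[OF assms(1)] H3_count[OF q2 pq np] .
  then show ?thesis using le1' by linarith
qed

theorem lemma3p12:
  fixes n :: nat
  assumes "n \<ge> 6"
  shows "card (H3 n (0, n - 2, 2)) = Min {card (H3 n C') | C'. valid3 n C'}"
proof (rule Min_eqI[symmetric])
  show "finite {card (H3 n C') | C'. valid3 n C'}"
  proof (rule finite_subset[of _ "{..card (Pow (Omega n))}"])
    show "{card (H3 n C') | C'. valid3 n C'} \<subseteq> {..card (Pow (Omega n))}"
    proof
      fix m assume "m \<in> {card (H3 n C') | C'. valid3 n C'}"
      then obtain C' where "m = card (H3 n C')" by auto
      moreover have "H3 n C' \<subseteq> Pow (Omega n)" unfolding H3_def by (auto split: prod.splits)
      moreover have "finite (Pow (Omega n))" unfolding Omega_def by simp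
      ultimately show "m \<in> {..card (Pow (Omega n))}"
        by (simp add: card_mono)
    qed
  qed simp
  show "\<And>y. y \<in> {card (H3 n C') | C'. valid3 n C'} \<Longrightarrow> card (H3 n (0, n - 2, 2)) \<le> y"
    using valid_ge[OF assms] by auto
  show "card (H3 n (0, n - 2, 2)) \<in> {card (H3 n C') | C'. valid3 n C'}"
    using C0_valid[OF assms] by auto
qed

end
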